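(* Let $p\ge1$ and $q\ge p$. Assume $Q_i(x;\{0\})=0$ for all $x$, and that the numerical flux is consistent, $\mathbb F(U,U)=f(U)$. Suppose there is an ODE solver for the stationary equation $f(U)_x=S(U)H_x$ with the following property. Given any smooth stationary solution $U^*$ and any $\Delta x$, it produces values $U^{*,m}_{\Delta x,i}$ ($m=1,\dots,M$) and $U^{*,i+1/2}_{\Delta x}$ for all $i$ such that $$U^{*,m}_{\Delta x,i}=U^*(x_i^m)+O(\Delta x^q)\quad\text{and}\quad U^{*,i+1/2}_{\Delta x}=U^*(x_{i+1/2})+O(\Delta x^q)$$ uniformly in $i$. Suppose further that, at every cell $i$, the local solver applied with $$\widetilde W=\widetilde U^*_{\Delta x,i}:=\sum_{m=1}^M b_m U^{*,m}_{\Delta x,i}$$ returns exactly - $U^{*,m}_{i,j}=U^{*,m}_{\Delta x,j}$ for $m=1,\dots,M$ and $j\in\mathcal S_i$, - $U_i^{*,i\pm1/2}=U^{*,i\pm1/2}_{\Delta x}$. Assume finally that the quadrature rule satisfies $\sum_m b_m U^*(x_i^m)=\frac1{\Delta x}\int_{I_i}U^*\,dx+O(\Delta x^p)$ uniformly in $i$. Then the numerical method is well-balanced with order $p$: for every such stationary solution $U^*$ and every $\Delta x$, the sequence $\{\widetilde U^*_{\Delta x,i}\}$ is an equilibrium of the semi-discrete system, and $$\frac{1}{\Delta x}\int_{x_{i-1/2}}^{x_{i+1/2}}U^*(x)\,dx=\widetilde U^*_{\Delta x,i}+O(\Delta x^p)\quad\text{for all }i.$$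
   Context: Consider a system of balance laws $U_t+f(U)_x=S(U)H_x(x)$, where $U\in\Omega$, $\Omega\subset\mathbb R^N$ is open and convex, $f,S:\Omega\to\mathbb R^N$, and $H:\mathbb R\to\mathbb R$ is differentiable. A stationary solution is a solution $U^*(x)$ of $f(U)_x=S(U)H_x$. Mesh and quadrature. The cells are $I_i=[x_{i-1/2},x_{i+1/2}]$, all of length $\Delta x$. In each cell there is a quadrature rule with nodes $x_i^m\in I_i$ and weights $b_m$, $m=1,\dots,M$. Each cell $i$ has a stencil $\mathcal S_i$, a finite set of indices containing $i$. Standard reconstruction. $Q_i(x;\{V_j\}_{j\in\mathcal S_i})$ is a standard reconstruction operator of order $p$. Local solver. A local solver, given $i$ and $\widetilde W\in\Omega$, returns values $U^{*,m}_{i,j}$ ($m=1,\dots,M$, $j\in\mathcal S_i$) and $U_i^{*,i\pm1/2}$. Reconstruction. Given cell values $\{\widetilde U_i\}$, at each cell $i$ proceed as follows. - Apply the local solver with $\widetilde W=\widetilde U_i$. - Set $V_j=\widetilde U_j-\sum_m b_m U^{*,m}_{i,j}$ and $Q_i(x)=Q_i(x;\{V_j\})$. - Define - $P_i^m=U^{*,m}_{i,i}+Q_i(x_i^m)$, - $U^+_{i-1/2}=U_i^{*,i-1/2}+Q_i(x_{i-1/2})$, - $U^-_{i+1/2}=U_i^{*,i+1/2}+Q_i(x_{i+1/2})$. Numerical method. The semi-discrete scheme is $$\frac{d\widetilde U_i}{dt}=-\frac{1}{\Delta x}\big(F_{i+1/2}-F_{i-1/2}\big)+\frac1{\Delta x}S_i,$$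 with $F_{i+1/2}=\mathbb F(U^-_{i+1/2},U^+_{i+1/2})$ and $$S_i=f(U_i^{*,i+1/2})-f(U_i^{*,i-1/2})+\Delta x\sum_m b_m\big(S(P_i^m)-S(U^{*,m}_{i,i})\big)H_x(x_i^m).$$ An equilibrium (discrete stationary solution) is a sequence $\{\widetilde U_i\}$ for which the right-hand side vanishes for every $i$. *)

theory Defs
  imports "HOL-Analysis.Analysis"
begin

text \<open>Mesh convention: for mesh size dx, cell I_i = [x_{i-1/2}, x_{i+1/2}] with
  x_{i-1/2} = i*dx and x_{i+1/2} = (i+1)*dx, i an integer.\<close>

definition xface :: "real \<Rightarrow> int \<Rightarrow> real" where
  "xface dx i = (real_of_int i + 1) * dx"

definition smooth_fun :: "(real \<Rightarrow> 'a::real_normed_vector) \<Rightarrow> bool" where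
  "smooth_fun u \<longleftrightarrow> (\<exists>D. D 0 = u \<and>
      (\<forall>k x. (D k has_vector_derivative D (Suc k) x) (at x)))"

definition stationary_sol ::
  "'a set \<Rightarrow> ('a \<Rightarrow> 'a::real_normed_vector) \<Rightarrow> ('a \<Rightarrow> 'a) \<Rightarrow> (real \<Rightarrow> real)
     \<Rightarrow> (real \<Rightarrow> 'a) \<Rightarrow> bool" where
  "stationary_sol \<Omega> f Sf H U \<longleftrightarrow> (\<forall>x. U x \<in> \<Omega>) \<and>
     (\<forall>x. ((\<lambda>y. f (U y)) has_vector_derivative (deriv H x *\<^sub>R Sf (U x))) (at x))"

text \<open>Parameters: f, Sf (source S), H, numerical flux F, reconstruction operator
  Qr dx i V x (= Q_i(x; {V_j}) on the mesh of size dx), stencil St, quadrature nodes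
  nd dx i m (= x_i^m), weights b, number of nodes M, local solver outputs
  lN dx i W m j (= U^{*,m}_{i,j}), lL dx i W (= U_i^{*,i-1/2}), lR dx i W (= U_i^{*,i+1/2}),
  mesh size dx, cell values Ut.  Values V_j outside the stencil are set to 0
  (Qr only uses V_j, j in the stencil).\<close>

definition recV where
  "recV St b M lN dx (Ut :: int \<Rightarrow> 'a::real_vector) i =
     (\<lambda>j. if j \<in> St i then Ut j - (\<Sum>m = 1..M. b m *\<^sub>R lN dx i (Ut i) m j) else 0)"

definition recQ where
  "recQ Qr St b M lN dx Ut i x = Qr dx i (recV St b M lN dx Ut i) x"

definition recP where
  "recP Qr St nd b M lN dx Ut i m =
     lN dx i (Ut i) m i + recQ Qr St b M lN dx Ut i (nd dx i m)"

definition recPlus where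
  "recPlus Qr St b M lN lL dx Ut i =
     lL dx i (Ut i) + recQ Qr St b M lN dx Ut i (xface dx (i - 1))"

definition recMinus where
  "recMinus Qr St b M lN lR dx Ut i =
     lR dx i (Ut i) + recQ Qr St b M lN dx Ut i (xface dx i)"

definition numflux where
  "numflux F Qr St b M lN lL lR dx Ut i =
     F (recMinus Qr St b M lN lR dx Ut i) (recPlus Qr St b M lN lL dx Ut (i + 1))"

definition numsource where
  "numsource f Sf H Qr St nd b M lN lL lR dx Ut i =
     f (lR dx i (Ut i)) - f (lL dx i (Ut i)) +
     dx *\<^sub>R (\<Sum>m = 1..M. (b m * deriv H (nd dx i m)) *\<^sub>R
        (Sf (recP Qr St nd b M lN dx Ut i m) - Sf (lN dx i (Ut i) m i)))"

definition sd_rhs where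
  "sd_rhs f Sf H F Qr St nd b M lN lL lR dx Ut i =
     - (1 / dx) *\<^sub>R (numflux F Qr St b M lN lL lR dx Ut i
                      - numflux F Qr St b M lN lL lR dx Ut (i - 1))
     + (1 / dx) *\<^sub>R numsource f Sf H Qr St nd b M lN lL lR dx Ut i"

definition equilibrium where
  "equilibrium f Sf H F Qr St nd b M lN lL lR dx Ut \<longleftrightarrow>
     (\<forall>i. sd_rhs f Sf H F Qr St nd b M lN lL lR dx Ut i = 0)"

end

theory Submission
  imports Defs
begin

theorem theorem2:
  fixes \<Omega> :: "(real ^ 'n) set"
    and f Sf :: "real ^ 'n \<Rightarrow> real ^ 'n"
    and H :: "real \<Rightarrow> real"
    and F :: "real ^ 'n \<Rightarrow> real ^ 'n \<Rightarrow> real ^ 'n"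
    and Qr :: "real \<Rightarrow> int \<Rightarrow> (int \<Rightarrow> real ^ 'n) \<Rightarrow> real \<Rightarrow> real ^ 'n"
    and St :: "int \<Rightarrow> int set"
    and nd :: "real \<Rightarrow> int \<Rightarrow> nat \<Rightarrow> real"
    and b :: "nat \<Rightarrow> real"
    and M p q :: nat
    and lN :: "real \<Rightarrow> int \<Rightarrow> real ^ 'n \<Rightarrow> nat \<Rightarrow> int \<Rightarrow> real ^ 'n"
    and lL lR :: "real \<Rightarrow> int \<Rightarrow> real ^ 'n \<Rightarrow> real ^ 'n"
    and odeN :: "(real \<Rightarrow> real ^ 'n) \<Rightarrow> real \<Rightarrow> int \<Rightarrow> nat \<Rightarrow> real ^ 'n"
    and odeF :: "(real \<Rightarrow> real ^ 'n) \<Rightarrow> real \<Rightarrow> int \<Rightarrow> real ^ 'n"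
  assumes Omega: "open \<Omega>" "convex \<Omega>"
    and H_diff: "\<And>x. H differentiable (at x)"
    and stencil: "\<And>i. finite (St i)" "\<And>i. i \<in> St i"
    and nodes: "\<And>dx i m. dx > 0 \<Longrightarrow> m \<in> {1..M} \<Longrightarrow>
                  nd dx i m \<in> {xface dx (i - 1) .. xface dx i}"
    and p_ge: "p \<ge> 1" and q_ge: "q \<ge> p"
    and Q_zero: "\<And>dx i x. Qr dx i (\<lambda>j. 0) x = 0"
    and flux_consistent: "\<And>u. u \<in> \<Omega> \<Longrightarrow> F u u = f u"
    and ode_in: "\<And>U dx i. smooth_fun U \<Longrightarrow> stationary_sol \<Omega> f Sf H U \<Longrightarrow> dx > 0 \<Longrightarrow>
                   odeF U dx i \<in> \<Omega>"
    and ode_acc: "\<And>U. smooth_fun U \<Longrightarrow> stationary_sol \<Omega> f Sf H U \<Longrightarrow>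
        \<exists>C \<delta>. \<delta> > 0 \<and> (\<forall>dx i. 0 < dx \<and> dx < \<delta> \<longrightarrow>
            (\<forall>m \<in> {1..M}. norm (odeN U dx i m - U (nd dx i m)) \<le> C * dx ^ q) \<and>
            norm (odeF U dx i - U (xface dx i)) \<le> C * dx ^ q)"
    and local_solver: "\<And>U dx i. smooth_fun U \<Longrightarrow> stationary_sol \<Omega> f Sf H U \<Longrightarrow> dx > 0 \<Longrightarrow>
        (let W = (\<Sum>m = 1..M. b m *\<^sub>R odeN U dx i m) in
           (\<forall>m \<in> {1..M}. \<forall>j \<in> St i. lN dx i W m j = odeN U dx j m) \<and>
           lL dx i W = odeF U dx (i - 1) \<and> lR dx i W = odeF U dx i)"
    and quadrature: "\<And>U. smooth_fun U \<Longrightarrow> stationary_sol \<Omega> f Sf H U \<Longrightarrow>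
        \<exists>C \<delta>. \<delta> > 0 \<and> (\<forall>dx i. 0 < dx \<and> dx < \<delta> \<longrightarrow>
            norm ((\<Sum>m = 1..M. b m *\<^sub>R U (nd dx i m))
                  - (1 / dx) *\<^sub>R integral {xface dx (i - 1) .. xface dx i} U) \<le> C * dx ^ p)"
  shows "\<forall>U. smooth_fun U \<and> stationary_sol \<Omega> f Sf H U \<longrightarrow>
           (\<forall>dx > 0. equilibrium f Sf H F Qr St nd b M lN lL lR dx
                        (\<lambda>i. \<Sum>m = 1..M. b m *\<^sub>R odeN U dx i m)) \<and>
           (\<exists>C \<delta>. \<delta> > 0 \<and> (\<forall>dx i. 0 < dx \<and> dx < \<delta> \<longrightarrow>
              norm ((1 / dx) *\<^sub>R integral {xface dx (i - 1) .. xface dx i} U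
                    - (\<Sum>m = 1..M. b m *\<^sub>R odeN U dx i m)) \<le> C * dx ^ p))"
proof (rule allI, rule impI, rule conjI)
  fix U assume UU: "smooth_fun U \<and> stationary_sol \<Omega> f Sf H U"
  hence sm: "smooth_fun U" and st: "stationary_sol \<Omega> f Sf H U" by auto
  show "\<forall>dx > 0. equilibrium f Sf H F Qr St nd b M lN lL lR dx
                        (\<lambda>i. \<Sum>m = 1..M. b m *\<^sub>R odeN U dx i m)"
  proof (intro allI impI)
    fix dx :: real assume dx: "dx > 0"
    define Ut where "Ut = (\<lambda>i. \<Sum>m = 1..M. b m *\<^sub>R odeN U dx i m)"
    have LS: "\<And>i. (\<forall>m \<in> {1..M}. \<forall>j \<in> St i. lN dx i (Ut i) m j = odeN U dx j m) \<and>
           lL dx i (Ut i) = odeF U dx (i - 1) \<and> lR dx i (Ut i) = odeF U dx i"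
      using local_solver[OF sm st dx] unfolding Ut_def Let_def by blast
    have V0: "\<And>i. recV St b M lN dx Ut i = (\<lambda>j. 0)"
    proof
      fix i j
      show "recV St b M lN dx Ut i j = 0"
      proof (cases "j \<in> St i")
        case True
        have "(\<Sum>m = 1..M. b m *\<^sub>R lN dx i (Ut i) m j) = Ut j"
        proof -
          have "(\<Sum>m = 1..M. b m *\<^sub>R lN dx i (Ut i) m j) = (\<Sum>m = 1..M. b m *\<^sub>R odeN U dx j m)"
            using LS[of i] True by (intro sum.cong) auto
          thus ?thesis by (simp add: Ut_def)
        qed
        thus ?thesis using True unfolding recV_def by simp
      qed (simp add: recV_def)
    qed
    have Q0: "\<And>i x. recQ Qr St b M lN dx Ut i x = 0"
      unfolding recQ_def V0 Q_zero by simp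
    have P: "\<And>i m. recP Qr St nd b M lN dx Ut i m = lN dx i (Ut i) m i"
      unfolding recP_def Q0 by simp
    have NF: "\<And>i. numflux F Qr St b M lN lL lR dx Ut i = f (odeF U dx i)"
      unfolding numflux_def recMinus_def recPlus_def Q0 using LS
      by (simp add: flux_consistent ode_in[OF sm st dx])
    have NS: "\<And>i. numsource f Sf H Qr St nd b M lN lL lR dx Ut i
                = f (odeF U dx i) - f (odeF U dx (i - 1))"
      unfolding numsource_def P using LS by simp
    have "equilibrium f Sf H F Qr St nd b M lN lL lR dx Ut"
      unfolding equilibrium_def sd_rhs_def NF NS
      by (simp add: algebra_simps)
    thus "equilibrium f Sf H F Qr St nd b M lN lL lR dx
                        (\<lambda>i. \<Sum>m = 1..M. b m *\<^sub>R odeN U dx i m)"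
      by (simp add: Ut_def)
  qed
  obtain C1 d1 where d1: "d1 > 0" and C1: "\<forall>dx i. 0 < dx \<and> dx < d1 \<longrightarrow>
            norm ((\<Sum>m = 1..M. b m *\<^sub>R U (nd dx i m))
                  - (1 / dx) *\<^sub>R integral {xface dx (i - 1) .. xface dx i} U) \<le> C1 * dx ^ p"
    using quadrature[OF sm st] by blast
  obtain C2 d2 where d2: "d2 > 0" and C2: "\<forall>dx i. 0 < dx \<and> dx < d2 \<longrightarrow>
            (\<forall>m \<in> {1..M}. norm (odeN U dx i m - U (nd dx i m)) \<le> C2 * dx ^ q) \<and>
            norm (odeF U dx i - U (xface dx i)) \<le> C2 * dx ^ q"
    using ode_acc[OF sm st] by blast
  define B where "B = (\<Sum>m = 1..M. \<bar>b m\<bar>)"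
  have B0: "B \<ge> 0" unfolding B_def by (simp add: sum_nonneg)
  show "\<exists>C \<delta>. \<delta> > 0 \<and> (\<forall>dx i. 0 < dx \<and> dx < \<delta> \<longrightarrow>
              norm ((1 / dx) *\<^sub>R integral {xface dx (i - 1) .. xface dx i} U
                    - (\<Sum>m = 1..M. b m *\<^sub>R odeN U dx i m)) \<le> C * dx ^ p)"
  proof (intro exI conjI allI impI)
    show "min (min d1 d2) 1 > 0" using d1 d2 by simp
    fix dx i assume h: "0 < dx \<and> dx < min (min d1 d2) 1"
    hence dx: "0 < dx" "dx < d1" "dx < d2" "dx < 1" by auto
    have C2m: "\<forall>m \<in> {1..M}. norm (odeN U dx i m - U (nd dx i m)) \<le> C2 * dx ^ q"
      using C2 dx by blast
    have pq: "dx ^ q \<le> dx ^ p" using dx q_ge by (simp add: power_decreasing)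
    have C2p: "0 \<le> C2 * dx ^ q" if "M \<ge> 1"
    proof -
      have "1 \<in> {1..M}" using that by simp
      thus ?thesis using C2m by (meson norm_ge_zero order_trans)
    qed
    let ?I = "(1 / dx) *\<^sub>R integral {xface dx (i - 1) .. xface dx i} U"
    have e1: "norm ((\<Sum>m = 1..M. b m *\<^sub>R U (nd dx i m)) - ?I) \<le> C1 * dx ^ p"
      using C1 dx by blast
    have "norm (\<Sum>m = 1..M. b m *\<^sub>R (U (nd dx i m) - odeN U dx i m))
          \<le> (\<Sum>m = 1..M. norm (b m *\<^sub>R (U (nd dx i m) - odeN U dx i m)))"
      by (rule norm_sum)
    also have "\<dots> \<le> (\<Sum>m = 1..M. \<bar>b m\<bar> * (C2 * dx ^ q))"
    proof (rule sum_mono)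
      fix m assume m: "m \<in> {1..M}"
      have "norm (U (nd dx i m) - odeN U dx i m) \<le> C2 * dx ^ q"
        using C2m m by (simp add: norm_minus_commute)
      thus "norm (b m *\<^sub>R (U (nd dx i m) - odeN U dx i m)) \<le> \<bar>b m\<bar> * (C2 * dx ^ q)"
        by (simp add: mult_left_mono)
    qed
    also have "\<dots> = B * (C2 * dx ^ q)" unfolding B_def by (simp add: sum_distrib_right)
    also have "\<dots> \<le> B * (max C2 0 * dx ^ p)"
    proof (cases "M \<ge> 1")
      case True
      have "C2 * dx ^ q \<le> max C2 0 * dx ^ p"
        using C2p[OF True] pq dx(1)
        by (smt (verit, best) mult_le_cancel_left mult_nonneg_nonneg zero_le_power max.cobounded1 max.cobounded2 mult_right_mono)
      thus ?thesis using B0 by (simp add: mult_left_mono)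
    next
      case False
      hence "M = 0" by simp
      thus ?thesis unfolding B_def by simp
    qed
    finally have e2: "norm (\<Sum>m = 1..M. b m *\<^sub>R (U (nd dx i m) - odeN U dx i m))
                      \<le> B * (max C2 0 * dx ^ p)" .
    have eq: "?I - (\<Sum>m = 1..M. b m *\<^sub>R odeN U dx i m)
          = (\<Sum>m = 1..M. b m *\<^sub>R (U (nd dx i m) - odeN U dx i m))
            - ((\<Sum>m = 1..M. b m *\<^sub>R U (nd dx i m)) - ?I)"
      by (simp add: scaleR_diff_right sum_subtractf)
    have "norm (?I - (\<Sum>m = 1..M. b m *\<^sub>R odeN U dx i m))
          \<le> B * (max C2 0 * dx ^ p) + C1 * dx ^ p"
      unfolding eq using e1 e2 by (smt (verit) norm_triangle_ineq4)
    thus "norm (?I - (\<Sum>m = 1..M. b m *\<^sub>R odeN U dx i m))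
          \<le> (C1 + B * max C2 0) * dx ^ p" by (simp add: algebra_simps)
  qed
qed

end
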